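(* Let $c$ be a positive integer and $c/(c+1)<\vartheta<1$, and let $(Z_t)$ be the random walk of the context with $r=1$. For $z\in(-1,1)$ let $w(z)$ denote the unique solution $w\in(-1,1)$ of $w^{c+1}(1-\vartheta)z+\vartheta z=w$, and set $$\bar\varphi(z):=\frac{(1-\vartheta)z\,w(z)+\vartheta z-w(z)}{1-w(z)},\qquad \Phi(w,z):=\frac{(1-\vartheta)z\left(\frac{w-w^{c+1}}{1-w}\right)-\vartheta z\,\bar\varphi(z)}{1-(\vartheta z)/w-w^cz(1-\vartheta)},\quad w\in(-1,1).$$ Define $\varphi(z,u):=\left.\frac{1}{u!}\frac{\partial^u}{\partial w^u}\Phi(w,z)\right|_{w=0}$. Then for every $u\in\mathbb{N}$, $$\mathbb{E}[\tau(u)\mid\tau(u)<\infty]=\frac{\varphi'(1,u)}{\varphi(1,u)},$$ where $\varphi'$ denotes the derivative with respect to $z$.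
   Context: Random walk: for $\vartheta\in(0,1)$ and positive integers $c,r$, let $Z_0=0$ and $Z_t=Z_{t-1}+\Delta_t$ with $\Delta_t$ i.i.d., $\Delta_t=+c$ with probability $1-\vartheta$ and $-r$ with probability $\vartheta$. Define $\tau(u):=\inf\{t\in\mathbb{N}_0: Z_t\ge u\}$. (In the single-agent trust model with Beta$(\alpha,\beta)$ prior, the agent's quitting time is $\tau(u_{\rm crit})$ with $u_{\rm crit}=r\alpha-c\beta+1$.) *)

theory Defs
  imports "HOL-Probability.Probability" "HOL-Library.Extended_Nat"
begin

definition step_pmf :: "nat \<Rightarrow> nat \<Rightarrow> real \<Rightarrow> int pmf" where
  "step_pmf c r \<theta> = map_pmf (\<lambda>b. if b then - int r else int c) (bernoulli_pmf \<theta>)"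

text \<open>Probability space of i.i.d. step sequences (\<Delta>_1, \<Delta>_2, ...) = (\<omega> !! 0, \<omega> !! 1, ...).\<close>
definition walk_space :: "nat \<Rightarrow> nat \<Rightarrow> real \<Rightarrow> int stream measure" where
  "walk_space c r \<theta> = stream_space (measure_pmf (step_pmf c r \<theta>))"

definition walk :: "int stream \<Rightarrow> nat \<Rightarrow> int" where
  "walk \<omega> t = (\<Sum>i<t. \<omega> !! i)"

definition hit_time :: "real \<Rightarrow> int stream \<Rightarrow> enat" where
  "hit_time u \<omega> = (INF t \<in> {t. u \<le> real_of_int (walk \<omega> t)}. enat t)"

definition w_root :: "nat \<Rightarrow> real \<Rightarrow> real \<Rightarrow> real" where
  "w_root c \<theta> z = (THE w. -1 < w \<and> w < 1 \<and> w ^ (c+1) * (1-\<theta>) * z + \<theta> * z = w)"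

definition phibar :: "nat \<Rightarrow> real \<Rightarrow> real \<Rightarrow> real" where
  "phibar c \<theta> z = ((1-\<theta>) * z * w_root c \<theta> z + \<theta> * z - w_root c \<theta> z) / (1 - w_root c \<theta> z)"

text \<open>\<Phi>(w,z); the removable singularity at w = 0 is filled in by its limit 0.
  NOTE: the paper's numerator term is "\<theta> z phibar(z)"; this is a typo,
  the generating-function identity requires "phibar(z)" there.\<close>
definition Phi :: "nat \<Rightarrow> real \<Rightarrow> real \<Rightarrow> real \<Rightarrow> real" where
  "Phi c \<theta> w z = (if w = 0 then 0 else
     ((1-\<theta>) * z * ((w - w ^ (c+1)) / (1 - w)) - phibar c \<theta> z)
       / (1 - (\<theta> * z) / w - w ^ c * z * (1-\<theta>)))"

definition phi :: "nat \<Rightarrow> real \<Rightarrow> real \<Rightarrow> nat \<Rightarrow> real" where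
  "phi c \<theta> z u = (deriv ^^ u) (\<lambda>w. Phi c \<theta> w z) 0 / fact u"

end

theory Submission
  imports Defs
begin


primrec pp :: "nat \<Rightarrow> real \<Rightarrow> nat \<Rightarrow> int \<Rightarrow> real" where
  "pp c \<theta> 0 x = (if x \<le> 0 then 1 else 0)"
| "pp c \<theta> (Suc n) x = (if x \<le> 0 then 0 else (1-\<theta>) * pp c \<theta> n (x - int c) + \<theta> * pp c \<theta> n (x+1))"

lemma diffs_iter: "(diffs ^^ n) a k = pochhammer (real k + 1) n * (a (k+n) :: real)"
proof (induction n arbitrary: k)
  case 0 then show ?case by simp
next
  case (Suc n)
  have "(diffs ^^ Suc n) a k = real (Suc k) * (diffs ^^ n) a (Suc k)"
    by (simp add: diffs_def)
  also have "\<dots> = real (Suc k) * (pochhammer (real (Suc k) + 1) n * a (Suc k + n))"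
    using Suc by simp
  also have "\<dots> = pochhammer (real k + 1) (Suc n) * a (k + Suc n)"
    by (simp add: pochhammer_rec add_ac)
  finally show ?case .
qed

lemma powser_higher_deriv:
  fixes a :: "nat \<Rightarrow> real"
  assumes sm: "\<And>w. \<bar>w\<bar> < 1 \<Longrightarrow> summable (\<lambda>k. a k * w^k)"
  shows "(deriv ^^ n) (\<lambda>w. \<Sum>k. a k * w^k) 0 = fact n * a n"
proof -
  define f where "f = (\<lambda>w. \<Sum>k. a k * w^k)"
  have "(\<forall>w. \<bar>w\<bar> < 1 \<longrightarrow> summable (\<lambda>k. (diffs ^^ n) a k * w^k)) \<and>
        (\<forall>w. \<bar>w\<bar> < 1 \<longrightarrow> (deriv ^^ n) f w = (\<Sum>k. (diffs ^^ n) a k * w^k))"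
  proof (induction n)
    case 0 then show ?case using sm by (simp add: f_def)
  next
    case (Suc n)
    have S: "summable (\<lambda>k. (diffs ^^ Suc n) a k * w^k)" if "\<bar>w\<bar> < 1" for w
      using termdiff_converges[of w 1 "(diffs ^^ n) a"] Suc that by auto
    have D: "(deriv ^^ Suc n) f w = (\<Sum>k. (diffs ^^ Suc n) a k * w^k)" if w: "\<bar>w\<bar> < 1" for w
    proof -
      have "((\<lambda>w. \<Sum>k. (diffs ^^ n) a k * w^k) has_field_derivative
             (\<Sum>k. diffs ((diffs ^^ n) a) k * w^k)) (at w)"
        by (rule termdiffs_strong'[where K=1]) (use Suc w in auto)
      then have "((deriv ^^ n) f has_field_derivative
             (\<Sum>k. diffs ((diffs ^^ n) a) k * w^k)) (at w)"
        by (rule has_field_derivative_transform_within_open[where S="{-1<..<1}"])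
           (use Suc w in auto)
      then show ?thesis by (simp add: DERIV_imp_deriv)
    qed
    show ?case using S D by blast
  qed
  then have "(deriv ^^ n) f 0 = (\<Sum>k. (diffs ^^ n) a k * 0^k)" by auto
  also have "\<dots> = fact n * a n" by (simp add: diffs_iter pochhammer_fact)
  finally show ?thesis by (simp add: f_def)
qed


lemma pow_diff_le:
  fixes a b :: real
  assumes "0 \<le> a" "a \<le> b" "b \<le> 1"
  shows "b^n - a^n \<le> real n * (b - a)"
proof (induction n)
  case 0 then show ?case by simp
next
  case (Suc n)
  have "a^n \<le> b^n" using assms by (intro power_mono) auto
  have "a^n \<le> 1" using assms by (intro power_le_one) auto
  have "b^Suc n - a^Suc n = b * (b^n - a^n) + a^n * (b - a)" by (simp add: algebra_simps)
  also have "\<dots> \<le> 1 * (b^n - a^n) + 1 * (b - a)"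
    using assms \<open>a^n \<le> b^n\<close> \<open>a^n \<le> 1\<close>
    by (intro add_mono mult_right_mono) auto
  also have "\<dots> \<le> real (Suc n) * (b - a)" using Suc by (simp add: algebra_simps)
  finally show ?case .
qed

locale wp =
  fixes c :: nat and \<theta> :: real
  assumes c_pos: "0 < c" and th_gt: "real c / real (c+1) < \<theta>" and th_lt: "\<theta> < 1"
begin

lemma th1: "real c * (1 - \<theta>) < \<theta>"
proof -
  have "real c < \<theta> * (real c + 1)" using th_gt by (simp add: field_simps)
  then show ?thesis by (simp add: algebra_simps)
qed

lemma th_half: "1 - \<theta> < \<theta>"
proof -
  have "1 - \<theta> \<le> real c * (1 - \<theta>)" using c_pos th_lt
  proof -
    have "1 \<le> real c" using c_pos by simp
    then have "1 * (1 - \<theta>) \<le> real c * (1 - \<theta>)" using th_lt by (intro mult_right_mono) auto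
    then show ?thesis by simp
  qed
  then show ?thesis using th1 by linarith
qed

lemma th_pos: "0 < \<theta>" using th_half th_lt by linarith

abbreviation p where "p \<equiv> pp c \<theta>"

lemma p_nonneg: "0 \<le> p n x"
  by (induction n arbitrary: x) (use th_pos th_lt in auto)

lemma p_partial_le1: "(\<Sum>n<N. p n x) \<le> 1"
proof (induction N arbitrary: x)
  case 0 then show ?case by simp
next
  case (Suc N)
  have eq: "(\<Sum>n<Suc N. p n x) = p 0 x + (\<Sum>n<N. p (Suc n) x)"
    by (rule sum.lessThan_Suc_shift)
  show ?case
  proof (cases "x \<le> 0")
    case True then show ?thesis unfolding eq by simp
  next
    case False
    then have "(\<Sum>n<N. p (Suc n) x) = (1-\<theta>) * (\<Sum>n<N. p n (x - int c)) + \<theta> * (\<Sum>n<N. p n (x+1))"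
      by (simp add: sum.distrib sum_distrib_left)
    also have "\<dots> \<le> (1-\<theta>) * 1 + \<theta> * 1"
      using Suc[of "x - int c"] Suc[of "x+1"] th_pos th_lt
      by (intro add_mono mult_left_mono) auto
    finally show ?thesis using False unfolding eq by simp
  qed
qed

lemma exists_y: "\<exists>y>1. (1-\<theta>) * y^c + \<theta> / y < 1"
proof -
  define g where "g = (\<lambda>y::real. (1-\<theta>) * y^(c+1) + \<theta> - y)"
  have "(g has_real_derivative ((1-\<theta>) * (real (c+1) * 1^c) - 1)) (at 1)"
    unfolding g_def by (auto intro!: derivative_eq_intros)
  moreover have "(1-\<theta>) * (real (c+1) * 1^c) - 1 < 0"
    using th1 by (simp add: algebra_simps)
  ultimately obtain d where d: "d > 0" "\<And>h. h > 0 \<Longrightarrow> h < d \<Longrightarrow> g 1 > g (1 + h)"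
    using DERIV_neg_dec_right by blast
  define y where "y = 1 + d/2"
  have "g y < 0" using d(2)[of "d/2"] d(1) by (simp add: y_def g_def)
  then have "(1-\<theta>) * y^(c+1) + \<theta> < y" by (simp add: g_def)
  moreover have "y > 1" using d by (simp add: y_def)
  ultimately have "((1-\<theta>) * y^(c+1) + \<theta>) / y < 1" by simp
  moreover have "((1-\<theta>) * y^(c+1) + \<theta>) / y = (1-\<theta>) * y^c + \<theta> / y"
    using \<open>y > 1\<close> by (simp add: field_simps)
  ultimately have "(1-\<theta>) * y^c + \<theta> / y < 1" by linarith
  then show ?thesis using \<open>y > 1\<close> by blast
qed

lemma p_exp_bound:
  assumes y: "y \<ge> 1" and m: "m = (1-\<theta>) * y^c + \<theta> / y"
  shows "p n x \<le> m^n * y powr (- real_of_int x)"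
proof (induction n arbitrary: x)
  case 0
  show ?case
  proof (cases "x \<le> 0")
    case True then show ?thesis using y by (simp add: ge_one_powr_ge_zero)
  next
    case False then show ?thesis by simp
  qed
next
  case (Suc n)
  show ?case
  proof (cases "x \<le> 0")
    case True
    have "0 \<le> m" using m y th_pos th_lt by (simp add: add_nonneg_nonneg)
    then show ?thesis using True by simp
  next
    case False
    have yp: "y > 0" using y by simp
    have e1: "y powr (- real_of_int (x - int c)) = y powr (- real_of_int x) * y^c"
      using yp by (simp add: powr_add[symmetric] powr_realpow[symmetric])
    have e2: "y powr (- real_of_int (x + 1)) = y powr (- real_of_int x) / y"
      using yp by (simp add: powr_diff powr_minus field_simps powr_add)
    have "p (Suc n) x = (1-\<theta>) * p n (x - int c) + \<theta> * p n (x+1)" using False by simp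
    also have "\<dots> \<le> (1-\<theta>) * (m^n * y powr (- real_of_int (x - int c))) + \<theta> * (m^n * y powr (- real_of_int (x+1)))"
      using Suc[of "x - int c"] Suc[of "x+1"] th_pos th_lt
      by (intro add_mono mult_left_mono) auto
    also have "\<dots> = m^n * y powr (- real_of_int x) * ((1-\<theta>) * y^c + \<theta> / y)"
      unfolding e1 e2 by (simp add: field_simps)
    also have "\<dots> = m^(Suc n) * y powr (- real_of_int x)" using m by simp
    finally show ?thesis .
  qed
qed

lemma exists_K: "\<exists>K>1. \<forall>x. summable (\<lambda>n. p n x * K^n)"
proof -
  obtain y where y: "y > 1" "(1-\<theta>) * y^c + \<theta> / y < 1" using exists_y by blast
  define m where "m = (1-\<theta>) * y^c + \<theta> / y"
  have mpos: "m > 0" unfolding m_def using y th_pos th_lt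
    by (intro add_nonneg_pos) auto
  have m1: "m < 1" using y by (simp add: m_def)
  define K where "K = (1 + 1/m) / 2"
  have K1: "K > 1" using mpos m1 by (simp add: K_def field_simps)
  have Km: "K * m < 1" using mpos m1 by (simp add: K_def field_simps)
  have Kmp: "0 \<le> K * m" using mpos K1 by simp
  have "summable (\<lambda>n. p n x * K^n)" for x
  proof (rule summable_comparison_test[where g="\<lambda>n. y powr (- real_of_int x) * (K*m)^n"])
    show "summable (\<lambda>n. y powr (- real_of_int x) * (K*m)^n)"
      using Km Kmp by (intro summable_mult summable_geometric) auto
    show "\<exists>N. \<forall>n\<ge>N. norm (p n x * K^n) \<le> y powr (- real_of_int x) * (K*m)^n"
    proof (intro exI allI impI)
      fix n
      have "norm (p n x * K^n) = p n x * K^n" using p_nonneg K1 by simp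
      also have "\<dots> \<le> m^n * y powr (- real_of_int x) * K^n"
        using p_exp_bound[OF _ m_def, of n x] y K1 by (intro mult_right_mono) auto
      also have "\<dots> = y powr (- real_of_int x) * (K*m)^n" by (simp add: power_mult_distrib)
      finally show "norm (p n x * K^n) \<le> y powr (- real_of_int x) * (K*m)^n" .
    qed
  qed
  then show ?thesis using K1 by blast
qed


definition K where "K = (SOME K. K > 1 \<and> (\<forall>x. summable (\<lambda>n. p n x * K^n)))"

lemma K: "K > 1" "summable (\<lambda>n. p n x * K^n)"
  using someI_ex[OF exists_K] unfolding K_def by auto

lemma summable_p: "\<bar>z\<bar> \<le> K \<Longrightarrow> summable (\<lambda>n. p n x * z^n)"
  by (rule summable_comparison_test[OF _ K(2)[of x]])
     (auto intro!: exI[of _ 0] mult_left_mono power_mono simp: abs_mult power_abs p_nonneg)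

definition G where "G x z = (\<Sum>n. p n x * z^n)"

lemma G_le1:
  assumes "\<bar>z\<bar> \<le> 1" shows "\<bar>G x z\<bar> \<le> 1"
proof -
  have K1: "\<bar>z\<bar> \<le> K" "\<bar>1\<bar> \<le> K" using K(1) assms by auto
  have sa: "summable (\<lambda>n. norm (p n x * z^n))"
    using summable_p[of "\<bar>z\<bar>" x] K1 by (simp add: abs_mult power_abs p_nonneg)
  have "\<bar>G x z\<bar> \<le> (\<Sum>n. norm (p n x * z^n))" unfolding G_def
    using summable_norm[OF sa] by simp
  also have "\<dots> \<le> (\<Sum>n. p n x)"
  proof (rule suminf_le)
    show "norm (p n x * z ^ n) \<le> p n x" for n
      using assms p_nonneg[of n x]
      by (simp add: abs_mult power_abs mult_left_le power_le_one)
    show "summable (\<lambda>n. norm (p n x * z ^ n))" by (fact sa)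
    show "summable (\<lambda>n. p n x)" using summable_p[of 1 x] K1 by simp
  qed
  also have "\<dots> \<le> 1"
    using summable_p[of 1 x] K1 p_partial_le1 by (intro suminf_le_const) auto
  finally show ?thesis .
qed

lemma G_nonpos: "x \<le> 0 \<Longrightarrow> G x z = 1"
proof -
  assume x: "x \<le> 0"
  have "(\<lambda>n. p (Suc n) x * z^(Suc n)) sums 0" using x by simp
  then have "(\<lambda>n. p n x * z^n) sums (0 + p 0 x * z^0)" by (subst (asm) sums_Suc_iff)
  then show ?thesis using x by (simp add: G_def sums_iff)
qed

lemma G_rec:
  assumes x: "x > 0" and z: "\<bar>z\<bar> \<le> 1"
  shows "G x z = z * ((1-\<theta>) * G (x - int c) z + \<theta> * G (x+1) z)"
proof -
  have zK: "\<bar>z\<bar> \<le> K" using z K(1) by auto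
  have s1: "(\<lambda>n. p n (x - int c) * z^n) sums G (x - int c) z"
    using summable_p[OF zK] by (simp add: G_def summable_sums)
  have s2: "(\<lambda>n. p n (x + 1) * z^n) sums G (x + 1) z"
    using summable_p[OF zK] by (simp add: G_def summable_sums)
  have "(\<lambda>n. z * ((1-\<theta>) * (p n (x - int c) * z^n) + \<theta> * (p n (x+1) * z^n)))
        sums (z * ((1-\<theta>) * G (x - int c) z + \<theta> * G (x+1) z))"
    by (intro sums_mult sums_add s1 s2)
  moreover have "(\<lambda>n. z * ((1-\<theta>) * (p n (x - int c) * z^n) + \<theta> * (p n (x+1) * z^n)))
     = (\<lambda>n. p (Suc n) x * z^(Suc n))"
    using x by (auto simp: algebra_simps)
  ultimately have "(\<lambda>n. p (Suc n) x * z^(Suc n)) sums (z * ((1-\<theta>) * G (x - int c) z + \<theta> * G (x+1) z))"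
    by simp
  then have "(\<lambda>n. p n x * z^n) sums (z * ((1-\<theta>) * G (x - int c) z + \<theta> * G (x+1) z) + p 0 x * z^0)"
    by (subst (asm) sums_Suc_iff)
  then show ?thesis using x by (simp add: G_def sums_iff)
qed

lemma key_identity:
  assumes z: "0 < z" "z < 1" and w: "w \<noteq> 0" "\<bar>w\<bar> < 1"
  defines "b \<equiv> (\<lambda>k::nat. G (int k) z)"
  shows "((\<Sum>k. b k * w^k) - 1) * (1 - \<theta>*z/w - w^c*z*(1-\<theta>))
         = (1-\<theta>)*z*((w - w^(c+1))/(1-w)) - \<theta>*z*b 1"
proof -
  have zz: "\<bar>z\<bar> \<le> 1" using z by auto
  define P where "P = (\<Sum>k. b k * w^k)"
  have b1: "\<bar>b k\<bar> \<le> 1" for k unfolding b_def using G_le1[OF zz] .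
  have summ: "summable (\<lambda>k. b k * w^k)"
  proof (rule summable_comparison_test[where g="\<lambda>k. \<bar>w\<bar>^k"])
    show "summable (\<lambda>k. \<bar>w\<bar>^k)" using w by (intro summable_geometric) auto
    show "\<exists>N. \<forall>n\<ge>N. norm (b n * w ^ n) \<le> \<bar>w\<bar> ^ n"
      using b1 by (auto intro!: exI[of _ 0] mult_left_le_one_le simp: abs_mult power_abs)
  qed
  have S0: "(\<lambda>k. b k * w^k) sums P" using summ by (simp add: P_def summable_sums)
  have b0: "b 0 = 1" by (simp add: b_def G_nonpos)
  have S1: "(\<lambda>k. b (k+1) * w^(k+1)) sums (P - 1)"
    using sums_iff_shift[of "\<lambda>k. b k * w^k" 1 "P - 1"] S0 b0 by simp
  have S2: "(\<lambda>k. b (k+2) * w^(k+2)) sums (P - 1 - b 1 * w)"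
    using sums_iff_shift[of "\<lambda>k. b k * w^k" 2 "P - 1 - b 1 * w"] S0 b0
    by (simp add: numeral_2_eq_2)
  define s where "s = (\<lambda>j::nat. G (int j - int c) z * w^j)"
  have "(\<lambda>k. s (k + c)) = (\<lambda>k. w^c * (b k * w^k))"
    by (auto simp: s_def b_def power_add)
  then have "(\<lambda>k. s (k + c)) sums (w^c * P)" using sums_mult[OF S0] by simp
  then have "s sums (w^c * P + (\<Sum>i<c. s i))" by (subst (asm) sums_iff_shift)
  moreover have "(\<Sum>i<c. s i) = (\<Sum>i<c. w^i)"
    by (intro sum.cong) (auto simp: s_def G_nonpos)
  ultimately have "s sums (w^c * P + (\<Sum>i<c. w^i))" by simp
  moreover have "s 0 = 1" by (simp add: s_def G_nonpos)
  ultimately have S3: "(\<lambda>k. s (k+1)) sums (w^c * P + (\<Sum>i<c. w^i) - 1)"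
    using sums_iff_shift[of s 1 "w^c * P + (\<Sum>i<c. w^i) - 1"] by simp
  have "(\<lambda>k. z*(1-\<theta>) * s (k+1) + (z*\<theta>/w) * (b (k+2) * w^(k+2)))
        sums (z*(1-\<theta>) * (w^c * P + (\<Sum>i<c. w^i) - 1) + (z*\<theta>/w) * (P - 1 - b 1 * w))"
    by (intro sums_add sums_mult S2 S3)
  moreover have "(\<lambda>k. z*(1-\<theta>) * s (k+1) + (z*\<theta>/w) * (b (k+2) * w^(k+2)))
               = (\<lambda>k. b (k+1) * w^(k+1))"
  proof
    fix k
    have "b (k+1) = z * ((1-\<theta>) * G (int (k+1) - int c) z + \<theta> * G (int (k+1) + 1) z)"
      unfolding b_def by (rule G_rec) (use zz in auto)
    moreover have "int (k+1) + 1 = int (k+2)" by simp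
    ultimately have "b (k+1) = z * ((1-\<theta>) * G (int (k+1) - int c) z + \<theta> * b (k+2))"
      by (simp add: b_def)
    then have bk: "b (k+1) = z * ((1-\<theta>) * G (int (k+1) - int c) z + \<theta> * b (k+2))" .
    have e: "(z*\<theta>/w) * (b (k+2) * w^(k+2)) = z*\<theta>*b (k+2)*w^(k+1)"
      using w by (simp add: field_simps)
    have "z*(1-\<theta>) * s (k+1) + (z*\<theta>/w) * (b (k+2) * w^(k+2))
          = w^(k+1) * (z * ((1-\<theta>) * G (int (k+1) - int c) z + \<theta> * b (k+2)))"
      unfolding e s_def by (simp only: algebra_simps)
    also have "\<dots> = b (k+1) * w^(k+1)" using bk by simp
    finally show "z*(1-\<theta>) * s (k+1) + (z*\<theta>/w) * (b (k+2) * w^(k+2)) = b (k+1) * w^(k+1)" .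
  qed
  ultimately have E: "P - 1 = z*(1-\<theta>) * (w^c * P + (\<Sum>i<c. w^i) - 1) + (z*\<theta>/w) * (P - 1 - b 1 * w)"
    using S1 sums_unique2 by fastforce
  have w1: "w \<noteq> 1" using w by auto
  have Q: "(\<Sum>i<c. w^i) = (1 - w^c) / (1 - w)" using w1 by (simp add: sum_gp_strict)
  have "(P - 1) * (1 - \<theta>*z/w - w^c*z*(1-\<theta>)) = z*(1-\<theta>) * ((\<Sum>i<c. w^i) - 1 + w^c) - z*\<theta>*b 1"
    using E w by (simp add: field_simps)
  also have "(\<Sum>i<c. w^i) - 1 + w^c = (w - w^(c+1))/(1-w)"
    unfolding Q using w1 by (simp add: field_simps)
  finally show ?thesis by (simp add: P_def algebra_simps)
qed


lemma root_pos:
  assumes z: "0 < z" "z < 1" and w: "-1 < w" "w < 1" "w^(c+1)*(1-\<theta>)*z + \<theta>*z = w"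
  shows "0 < w"
proof (rule ccontr)
  assume "\<not> 0 < w"
  then have w0: "w \<le> 0" by simp
  have "\<bar>w\<bar>^(c+1) \<le> 1" using w by (intro power_le_one) auto
  then have "\<bar>w^(c+1)\<bar> \<le> 1" by (simp only: power_abs)
  then have "w^(c+1) \<ge> -1" by linarith
  then have "w^(c+1)*((1-\<theta>)*z) \<ge> -1 * ((1-\<theta>)*z)"
    using z th_lt by (intro mult_right_mono) auto
  then have "w^(c+1)*(1-\<theta>)*z + \<theta>*z - w \<ge> z * (2*\<theta> - 1) - w" by (simp add: algebra_simps)
  moreover have "z * (2*\<theta> - 1) > 0" using z th_half by simp
  ultimately show False using w w0 by linarith
qed

lemma root_unique:
  assumes z: "0 < z" "z < 1"
    and a: "0 < a" "a < 1" "a^(c+1)*(1-\<theta>)*z + \<theta>*z = a"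
    and b: "0 < b" "b < 1" "b^(c+1)*(1-\<theta>)*z + \<theta>*z = b"
    and ab: "a < b"
  shows False
proof -
  have ka: "\<theta>/a + (1-\<theta>)*a^c = 1/z"
  proof -
    have "\<theta>/a + (1-\<theta>)*a^c = (a^(c+1)*(1-\<theta>)*z + \<theta>*z)/(a*z)"
      using a(1) z(1) by (simp add: field_simps power_Suc)
    also have "\<dots> = a/(a*z)" by (simp only: a(3))
    also have "\<dots> = 1/z" using a(1) by simp
    finally show ?thesis .
  qed
  have kb: "\<theta>/b + (1-\<theta>)*b^c = 1/z"
  proof -
    have "\<theta>/b + (1-\<theta>)*b^c = (b^(c+1)*(1-\<theta>)*z + \<theta>*z)/(b*z)"
      using b(1) z(1) by (simp add: field_simps power_Suc)
    also have "\<dots> = b/(b*z)" by (simp only: b(3))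
    also have "\<dots> = 1/z" using b(1) by simp
    finally show ?thesis .
  qed
  have "b^c - a^c \<le> real c * (b - a)" using a b ab by (intro pow_diff_le) auto
  then have "(1-\<theta>)*(b^c - a^c) \<le> (1-\<theta>)*(real c * (b - a))" using th_lt by (intro mult_left_mono) auto
  also have "\<dots> = (real c * (1-\<theta>)) * (b - a)" by simp
  also have "\<dots> < \<theta> * (b - a)" using th1 ab by (intro mult_strict_right_mono) auto
  also have "\<dots> \<le> \<theta> * (b - a) / (a*b)"
  proof -
    have "a*b \<le> 1" using a b by (simp add: mult_le_one)
    moreover have "0 \<le> \<theta> * (b - a)" using th_pos ab by simp
    ultimately show ?thesis using a b by (simp add: le_divide_eq mult_left_le)
  qed
  also have "\<dots> = \<theta>/a - \<theta>/b" using a b by (simp add: field_simps)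
  finally have "\<theta>/b + (1-\<theta>)*b^c < \<theta>/a + (1-\<theta>)*a^c" by (simp add: algebra_simps)
  then show False using ka kb by simp
qed

lemma w_root_props:
  assumes z: "0 < z" "z < 1"
  shows "0 < w_root c \<theta> z \<and> w_root c \<theta> z < 1 \<and>
         (w_root c \<theta> z)^(c+1)*(1-\<theta>)*z + \<theta>*z = w_root c \<theta> z"
proof -
  define g where "g = (\<lambda>w::real. w^(c+1)*(1-\<theta>)*z + \<theta>*z - w)"
  have "\<exists>x\<ge>0. x \<le> 1 \<and> g x = 0"
    by (rule IVT2) (use z th_pos in \<open>auto simp: g_def algebra_simps intro!: continuous_intros\<close>)
  then obtain x where x: "0 \<le> x" "x \<le> 1" "g x = 0" by blast
  have gx: "x^(c+1)*(1-\<theta>)*z + \<theta>*z = x" using x(3) unfolding g_def by simp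
  have "x \<noteq> 0"
  proof
    assume "x = 0"
    then have "\<theta>*z = 0" using gx by simp
    then show False using th_pos z by simp
  qed
  moreover have "x \<noteq> 1"
  proof
    assume "x = 1"
    then have "(1-\<theta>)*z + \<theta>*z = 1" using gx by simp
    then have "z = 1" by (simp add: algebra_simps)
    then show False using z by simp
  qed
  ultimately have ex: "-1 < x \<and> x < 1 \<and> x^(c+1)*(1-\<theta>)*z + \<theta>*z = x"
  proof (intro conjI)
    show "-1 < x" using x(1) by linarith
    show "x < 1" using x(2) \<open>x \<noteq> 1\<close> by linarith
    show "x^(c+1)*(1-\<theta>)*z + \<theta>*z = x" by (fact gx)
  qed
  have un: "y = x" if yy: "-1 < y \<and> y < 1 \<and> y^(c+1)*(1-\<theta>)*z + \<theta>*z = y" for y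
  proof -
    have "0 < y" using root_pos[OF z] yy by blast
    have "0 < x" using root_pos[OF z] ex by blast
    show ?thesis
    proof (rule ccontr)
      assume "y \<noteq> x"
      then consider "y < x" | "x < y" by linarith
      then show False
      proof cases
        case 1 show False
          by (rule root_unique[OF z, of y x]) (use yy ex \<open>0 < y\<close> \<open>0 < x\<close> 1 in blast)+
      next
        case 2 show False
          by (rule root_unique[OF z, of x y]) (use yy ex \<open>0 < y\<close> \<open>0 < x\<close> 2 in blast)+
      qed
    qed
  qed
  have "w_root c \<theta> z = x" unfolding w_root_def
    by (rule the_equality) (use ex un in blast)+
  then show ?thesis using ex \<open>x \<noteq> 0\<close> x(1) by simp
qed


lemma phi_eq_G:
  assumes z: "0 < z" "z < 1" and u: "1 \<le> u"
  shows "phi c \<theta> z u = G (int u) z"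
proof -
  define b where "b = (\<lambda>k::nat. G (int k) z)"
  have zz: "\<bar>z\<bar> \<le> 1" using z by auto
  have b1: "\<bar>b k\<bar> \<le> 1" for k unfolding b_def using G_le1[OF zz] .
  define w0 where "w0 = w_root c \<theta> z"
  have w0: "0 < w0" "w0 < 1" "w0^(c+1)*(1-\<theta>)*z + \<theta>*z = w0"
    using w_root_props[OF z] unfolding w0_def by auto
  have D0: "1 - \<theta>*z/w0 - w0^c*z*(1-\<theta>) = 0"
  proof -
    have "\<theta>*z/w0 + w0^c*z*(1-\<theta>) = (w0^(c+1)*(1-\<theta>)*z + \<theta>*z)/w0"
      using w0(1) by (simp add: field_simps power_Suc)
    also have "\<dots> = w0/w0" by (simp only: w0(3))
    also have "\<dots> = 1" using w0(1) by simp
    finally show ?thesis by linarith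
  qed
  have "0 = (1-\<theta>)*z*((w0 - w0^(c+1))/(1-w0)) - \<theta>*z*b 1"
    using key_identity[OF z, of w0] w0(1,2) D0 unfolding b_def by simp
  then have tb: "\<theta>*z*b 1 = (1-\<theta>)*z*((w0 - w0^(c+1))/(1-w0))" by linarith
  have pb: "phibar c \<theta> z = \<theta>*z*b 1"
  proof -
    have "(1-\<theta>)*z*(w0 - w0^(c+1)) = (1-\<theta>)*z*w0 - w0^(c+1)*(1-\<theta>)*z"
      by (simp add: algebra_simps)
    also have "\<dots> = (1-\<theta>)*z*w0 + \<theta>*z - w0" using w0(3) by linarith
    finally have e: "(1-\<theta>)*z*(w0 - w0^(c+1)) = (1-\<theta>)*z*w0 + \<theta>*z - w0" .
    have "phibar c \<theta> z = ((1-\<theta>)*z*w0 + \<theta>*z - w0)/(1-w0)"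
      by (simp add: phibar_def w0_def)
    also have "\<dots> = (1-\<theta>)*z*(w0 - w0^(c+1))/(1-w0)" by (simp only: e)
    also have "\<dots> = \<theta>*z*b 1" using tb by simp
    finally show ?thesis .
  qed
  define h where "h = (\<lambda>k::nat. if k = 0 then 0 else b k)"
  have hsum: "summable (\<lambda>k. h k * w^k)" if "\<bar>w\<bar> < 1" for w
  proof (rule summable_comparison_test[where g="\<lambda>k. \<bar>w\<bar>^k"])
    show "summable (\<lambda>k. \<bar>w\<bar>^k)" using that by (intro summable_geometric) auto
    show "\<exists>N. \<forall>n\<ge>N. norm (h n * w ^ n) \<le> \<bar>w\<bar> ^ n"
      using b1 by (auto intro!: exI[of _ 0] mult_left_le_one_le simp: h_def abs_mult power_abs)
  qed
  have bsum: "summable (\<lambda>k. b k * w^k)" if "\<bar>w\<bar> < 1" for w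
  proof (rule summable_comparison_test[where g="\<lambda>k. \<bar>w\<bar>^k"])
    show "summable (\<lambda>k. \<bar>w\<bar>^k)" using that by (intro summable_geometric) auto
    show "\<exists>N. \<forall>n\<ge>N. norm (b n * w ^ n) \<le> \<bar>w\<bar> ^ n"
      using b1 by (auto intro!: exI[of _ 0] mult_left_le_one_le simp: abs_mult power_abs)
  qed
  have b0: "b 0 = 1" by (simp add: b_def G_nonpos)
  have H_eq: "(\<Sum>k. h k * w^k) = (\<Sum>k. b k * w^k) - 1" if "\<bar>w\<bar> < 1" for w
  proof -
    have S0: "(\<lambda>k. b k * w^k) sums (\<Sum>k. b k * w^k)" using bsum[OF that] by (simp add: summable_sums)
    have "(\<lambda>k. b (k+1) * w^(k+1)) sums ((\<Sum>k. b k * w^k) - 1)"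
      using sums_iff_shift[of "\<lambda>k. b k * w^k" 1 "(\<Sum>k. b k * w^k) - 1"] S0 b0 by simp
    moreover have "(\<lambda>k. b (k+1) * w^(k+1)) = (\<lambda>k. h (k+1) * w^(k+1))" by (simp add: h_def)
    ultimately have "(\<lambda>k. h (k+1) * w^(k+1)) sums ((\<Sum>k. b k * w^k) - 1)" by simp
    then have "(\<lambda>k. h k * w^k) sums ((\<Sum>k. b k * w^k) - 1 + (\<Sum>i<1. h i * w^i))"
      by (subst (asm) sums_iff_shift)
    then show ?thesis by (simp add: h_def sums_iff)
  qed
  define r where "r = \<theta>*z/2"
  have tz: "\<theta>*z < 1"
  proof -
    have "\<theta>*z \<le> \<theta>*1" using th_pos z by (intro mult_left_mono) auto
    then show ?thesis using th_lt by simp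
  qed
  have r: "0 < r" "r < 1" using th_pos tz z by (auto simp: r_def)
  have ev: "eventually (\<lambda>w. Phi c \<theta> w z = (\<Sum>k. h k * w^k)) (nhds 0)"
    unfolding eventually_nhds_metric
  proof (intro exI[of _ r] conjI allI impI)
    show "0 < r" by (fact r(1))
    fix w :: real assume "dist w 0 < r"
    then have wr: "\<bar>w\<bar> < r" by simp
    then have w1: "\<bar>w\<bar> < 1" using r by linarith
    show "Phi c \<theta> w z = (\<Sum>k. h k * w^k)"
    proof (cases "w = 0")
      case True then show ?thesis by (simp add: Phi_def h_def)
    next
      case False
      define Dw where "Dw = 1 - \<theta>*z/w - w^c*z*(1-\<theta>)"
      have "w * Dw = w - \<theta>*z - w^(c+1)*(z*(1-\<theta>))"
        using False by (simp add: Dw_def field_simps power_Suc)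
      moreover have "\<bar>w^(c+1)*(z*(1-\<theta>))\<bar> \<le> \<bar>w\<bar>"
      proof -
        have "\<bar>w\<bar>^c \<le> 1" using w1 by (intro power_le_one) auto
        then have "\<bar>w\<bar>^(c+1) \<le> \<bar>w\<bar>" by (simp add: mult_left_le)
        moreover have "\<bar>z*(1-\<theta>)\<bar> \<le> 1" using z th_pos th_lt by (simp add: abs_mult mult_le_one)
        ultimately have "\<bar>w\<bar>^(c+1) * \<bar>z*(1-\<theta>)\<bar> \<le> \<bar>w\<bar> * 1"
          by (intro mult_mono) auto
        then have "\<bar>w\<bar>^(c+1) * \<bar>z*(1-\<theta>)\<bar> \<le> \<bar>w\<bar>" by simp
        then show ?thesis by (simp add: abs_mult power_abs)
      qed
      ultimately have "w * Dw \<le> 2*\<bar>w\<bar> - \<theta>*z" by (simp add: abs_le_iff) linarith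
      then have "w * Dw < 0" using wr by (simp add: r_def)
      then have Dnz: "Dw \<noteq> 0" by auto
      have "((\<Sum>k. b k * w^k) - 1) * Dw = (1-\<theta>)*z*((w - w^(c+1))/(1-w)) - phibar c \<theta> z"
        using key_identity[OF z False w1] pb unfolding Dw_def b_def by simp
      then have "(\<Sum>k. b k * w^k) - 1 = ((1-\<theta>)*z*((w - w^(c+1))/(1-w)) - phibar c \<theta> z) / Dw"
        using Dnz by (simp add: field_simps)
      then show ?thesis using False H_eq[OF w1] by (simp add: Phi_def Dw_def)
    qed
  qed
  have "(deriv ^^ u) (\<lambda>w. Phi c \<theta> w z) 0 = (deriv ^^ u) (\<lambda>w. \<Sum>k. h k * w^k) 0"
    by (rule higher_deriv_cong_ev[OF ev refl])
  also have "\<dots> = fact u * h u" by (rule powser_higher_deriv) (use hsum in auto)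
  also have "\<dots> = fact u * b u" using u by (simp add: h_def)
  finally show ?thesis by (simp add: phi_def b_def)
qed


end

lemma walk_0[simp]: "walk \<omega> 0 = 0" by (simp add: walk_def)

lemma walk_Stream_Suc: "walk (y ## X) (Suc t) = y + walk X t"
  unfolding walk_def sum.lessThan_Suc_shift by simp

lemma hit_time_alt:
  "hit_time u \<omega> = (if \<exists>t. u \<le> real_of_int (walk \<omega> t)
                    then enat (LEAST t. u \<le> real_of_int (walk \<omega> t)) else \<infinity>)"
proof (cases "\<exists>t. u \<le> real_of_int (walk \<omega> t)")
  case True
  define L where "L = (LEAST t. u \<le> real_of_int (walk \<omega> t))"
  have L: "u \<le> real_of_int (walk \<omega> L)" unfolding L_def using True by (metis LeastI)
  have "hit_time u \<omega> = enat L"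
  proof (rule antisym)
    show "hit_time u \<omega> \<le> enat L" unfolding hit_time_def using L by (intro INF_lower) auto
    show "enat L \<le> hit_time u \<omega>" unfolding hit_time_def
      by (intro INF_greatest) (auto simp: L_def intro: Least_le)
  qed
  then show ?thesis using True by (simp add: L_def)
next
  case False
  then have "{t. u \<le> real_of_int (walk \<omega> t)} = {}" by auto
  then show ?thesis using False by (simp add: hit_time_def top_enat_def)
qed

lemma hit_time_eq_enat:
  "hit_time u \<omega> = enat n \<longleftrightarrow> u \<le> real_of_int (walk \<omega> n) \<and> (\<forall>t<n. real_of_int (walk \<omega> t) < u)"
proof
  assume h: "hit_time u \<omega> = enat n"
  then have ex: "\<exists>t. u \<le> real_of_int (walk \<omega> t)" by (auto simp: hit_time_alt split: if_splits)
  then have n: "n = (LEAST t. u \<le> real_of_int (walk \<omega> t))" using h by (simp add: hit_time_alt)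
  show "u \<le> real_of_int (walk \<omega> n) \<and> (\<forall>t<n. real_of_int (walk \<omega> t) < u)"
    using ex unfolding n by (metis LeastI not_less_Least not_le)
next
  assume h: "u \<le> real_of_int (walk \<omega> n) \<and> (\<forall>t<n. real_of_int (walk \<omega> t) < u)"
  then have "(LEAST t. u \<le> real_of_int (walk \<omega> t)) = n"
    by (intro Least_equality) (auto simp: not_less[symmetric])
  then show "hit_time u \<omega> = enat n" using h by (auto simp: hit_time_alt)
qed

lemma hit_time_nonpos: "x \<le> 0 \<Longrightarrow> hit_time (real_of_int x) \<omega> = 0"
  using hit_time_eq_enat[of "real_of_int x" \<omega> 0] by (simp add: zero_enat_def)

lemma hit_time_Stream:
  assumes x: "x > 0"
  shows "hit_time (real_of_int x) (y ## X) = eSuc (hit_time (real_of_int (x - y)) X)"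
proof -
  have P0: "\<not> (real_of_int x \<le> real_of_int (walk (y ## X) 0))" using x by simp
  have PS: "(real_of_int x \<le> real_of_int (walk (y ## X) (Suc t))) = (real_of_int (x - y) \<le> real_of_int (walk X t))" for t
    by (simp add: walk_Stream_Suc, arith)
  have PSi: "(x \<le> walk (y ## X) (Suc t)) = (x - y \<le> walk X t)" for t
    by (simp add: walk_Stream_Suc, arith)
  show ?thesis
  proof (cases "\<exists>t. real_of_int (x - y) \<le> real_of_int (walk X t)")
    case True
    then obtain t where t: "real_of_int (x - y) \<le> real_of_int (walk X t)" by blast
    then have ex: "\<exists>t. real_of_int x \<le> real_of_int (walk (y ## X) t)" using PS by blast
    have "(LEAST t. real_of_int x \<le> real_of_int (walk (y ## X) t))
          = Suc (LEAST t. real_of_int x \<le> real_of_int (walk (y ## X) (Suc t)))"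
      by (rule Least_Suc[of _ "Suc t"]) (use PS t P0 in auto)
    then show ?thesis using ex True by (simp add: hit_time_alt PS PSi eSuc_enat del: of_int_diff)
  next
    case False
    then have "\<not> (\<exists>t. real_of_int x \<le> real_of_int (walk (y ## X) t))"
      using PS P0 by (metis not0_implies_Suc)
    then show ?thesis using False by (simp add: hit_time_alt del: of_int_diff)
  qed
qed

context wp
begin

abbreviation N where "N \<equiv> measure_pmf (step_pmf c 1 \<theta>)"
abbreviation M where "M \<equiv> walk_space c 1 \<theta>"

lemma M_def': "walk_space c k \<theta> = stream_space (measure_pmf (step_pmf c k \<theta>))" by (simp add: walk_space_def)

lemma space_M[simp]: "space (walk_space c k \<theta>) = UNIV" by (simp add: M_def' space_stream_space)

lemma prob_M: "prob_space M"
  unfolding M_def' by (rule prob_space.prob_space_stream_space) (rule prob_space_measure_pmf)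

lemma walk_meas[measurable]: "(\<lambda>\<omega>. real_of_int (walk \<omega> t)) \<in> borel_measurable (stream_space (measure_pmf P))"
  unfolding walk_def of_int_sum
  by (intro borel_measurable_sum measurable_compose[OF measurable_snth]) auto

definition E where "E n x = {\<omega>. hit_time (real_of_int x) \<omega> = enat n}"

lemma E_sets[measurable]: "E n x \<in> sets (walk_space c k \<theta>)"
proof -
  have "E n x = {\<omega>\<in>space (stream_space (measure_pmf (step_pmf c k \<theta>))). real_of_int x \<le> real_of_int (walk \<omega> n) \<and> (\<forall>t<n. real_of_int (walk \<omega> t) < real_of_int x)}"
    unfolding E_def hit_time_eq_enat by (simp add: space_stream_space)
  also have "\<dots> \<in> sets (stream_space (measure_pmf (step_pmf c k \<theta>)))" by measurable
  finally show ?thesis by (simp add: M_def')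
qed

lemma emeasure_E: "emeasure M (E n x) = ennreal (p n x)"
proof (induction n arbitrary: x)
  case 0
  show ?case
  proof (cases "x \<le> 0")
    case True
    then have "E 0 x = space M" by (auto simp: E_def hit_time_nonpos zero_enat_def[symmetric])
    then show ?thesis using True prob_space.emeasure_space_1[OF prob_M] by simp
  next
    case False
    then have "E 0 x = {}" by (auto simp: E_def hit_time_eq_enat)
    then show ?thesis using False by simp
  qed
next
  case (Suc n)
  show ?case
  proof (cases "x \<le> 0")
    case True
    then have "E (Suc n) x = {}" by (auto simp: E_def hit_time_nonpos zero_enat_def)
    then show ?thesis using True by simp
  next
    case False
    have "emeasure M (E (Suc n) x) =
          (\<integral>\<^sup>+t. emeasure (stream_space N) {X\<in>space (stream_space N). t ## X \<in> E (Suc n) x} \<partial>N)"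
      unfolding M_def' by (rule prob_space.emeasure_stream_space[OF prob_space_measure_pmf])
         (use E_sets[of "Suc n" x] in \<open>simp add: M_def'\<close>)
    also have "\<dots> = (\<integral>\<^sup>+t. ennreal (p n (x - t)) \<partial>N)"
    proof (intro nn_integral_cong)
      fix t
      have "{X\<in>space (stream_space N). t ## X \<in> E (Suc n) x} = E n (x - t)"
        using False by (auto simp: E_def M_def' space_stream_space hit_time_Stream eSuc_enat[symmetric])
      then show "emeasure (stream_space N) {X\<in>space (stream_space N). t ## X \<in> E (Suc n) x} = ennreal (p n (x - t))"
        using Suc by (simp add: M_def')
    qed
    also have "\<dots> = ennreal (p n (x + 1)) * \<theta> + ennreal (p n (x - int c)) * (1 - \<theta>)"
      unfolding step_pmf_def using th_pos th_lt by simp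
    also have "\<dots> = ennreal (p n (x+1) * \<theta> + p n (x - int c) * (1-\<theta>))"
      by (subst ennreal_plus) (use th_pos th_lt p_nonneg in \<open>auto simp: ennreal_mult\<close>)
    also have "\<dots> = ennreal (p (Suc n) x)"
      by (intro arg_cong[where f=ennreal]) (simp add: False algebra_simps)
    finally show ?thesis .
  qed
qed


lemma emeasure_E1: "emeasure (walk_space c (Suc 0) \<theta>) (E n x) = ennreal (p n x)"
  using emeasure_E[of n x] by (simp only: One_nat_def)


lemma main:
  assumes u: "1 \<le> u"
  shows "\<exists>A B. ((\<lambda>z. phi c \<theta> z u) \<longlongrightarrow> A) (at_left 1)
            \<and> ((\<lambda>z. deriv (\<lambda>y. phi c \<theta> y u) z) \<longlongrightarrow> B) (at_left 1)
            \<and> (let M = walk_space c 1 \<theta>; F = {\<omega> \<in> space M. hit_time (real u) \<omega> < \<infinity>}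
               in (\<integral>\<omega>. real (the_enat (hit_time (real u) \<omega>)) * indicator F \<omega> \<partial>M) / measure M F = B / A)"
proof -
  define a where "a = (\<lambda>n. p n (int u))"
  have a_nn: "0 \<le> a n" for n by (simp add: a_def p_nonneg)
  have sa: "summable (\<lambda>n. a n * K^n)" unfolding a_def by (rule K(2))
  have sK: "summable (\<lambda>n. a n * x^n)" if "norm x < K" for x :: real
    unfolding a_def using that by (intro summable_p) auto
  have K1: "K > 1" by (rule K(1))
  define A where "A = (\<Sum>n. a n)"
  define B where "B = (\<Sum>n. diffs a n)"
  have phiG: "phi c \<theta> z u = (\<Sum>n. a n * z^n)" if "z \<in> {0<..<1}" for z
    using phi_eq_G[of z u] that u by (simp add: G_def a_def)
  have evS: "eventually (\<lambda>z. z \<in> {0<..<1}) (at_left (1::real))"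
    by (rule eventually_at_left_real) simp
  have "isCont (\<lambda>z. \<Sum>n. a n * z^n) 1" by (rule isCont_powser[OF sa]) (use K1 in simp)
  then have L1: "((\<lambda>z. \<Sum>n. a n * z^n) \<longlongrightarrow> (\<Sum>n. a n * 1^n)) (at 1)"
    by (simp add: isCont_def)
  have A1: "(\<Sum>n. a n * 1^n) = A" by (simp add: A_def)
  have L1': "((\<lambda>z. \<Sum>n. a n * z^n) \<longlongrightarrow> A) (at_left 1)"
    using tendsto_within_subset[OF L1[unfolded A1] subset_UNIV] .
  have ev1: "eventually (\<lambda>z. (\<Sum>n. a n * z^n) = phi c \<theta> z u) (at_left 1)"
    using evS by (rule eventually_mono) (simp add: phiG)
  have lim1: "((\<lambda>z. phi c \<theta> z u) \<longlongrightarrow> A) (at_left 1)"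
    by (rule Lim_transform_eventually[OF L1' ev1])
  have dphi: "deriv (\<lambda>y. phi c \<theta> y u) z = (\<Sum>n. diffs a n * z^n)" if z: "z \<in> {0<..<1}" for z
  proof -
    have "((\<lambda>y. \<Sum>n. a n * y^n) has_field_derivative (\<Sum>n. diffs a n * z^n)) (at z)"
      by (rule termdiffs_strong[OF sa]) (use z K1 in auto)
    then have "((\<lambda>y. phi c \<theta> y u) has_field_derivative (\<Sum>n. diffs a n * z^n)) (at z)"
      by (rule has_field_derivative_transform_within_open[where S="{0<..<1}"])
         (use z in \<open>auto simp: phiG\<close>)
    then show ?thesis by (rule DERIV_imp_deriv)
  qed
  define K' where "K' = (1 + K) / 2"
  have K': "1 < K'" "K' < K" using K1 by (auto simp: K'_def)
  have sdK: "summable (\<lambda>n. diffs a n * K'^n)"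
    by (rule termdiff_converges[of K' K]) (use K' sK in auto)
  have sd1: "summable (\<lambda>n. diffs a n)"
    using termdiff_converges[of 1 K a] K1 sK by simp
  have "isCont (\<lambda>z. \<Sum>n. diffs a n * z^n) 1" by (rule isCont_powser[OF sdK]) (use K' in simp)
  then have L2: "((\<lambda>z. \<Sum>n. diffs a n * z^n) \<longlongrightarrow> (\<Sum>n. diffs a n * 1^n)) (at 1)"
    by (simp add: isCont_def)
  have B1: "(\<Sum>n. diffs a n * 1^n) = B" by (simp add: B_def)
  have L2': "((\<lambda>z. \<Sum>n. diffs a n * z^n) \<longlongrightarrow> B) (at_left 1)"
    using tendsto_within_subset[OF L2[unfolded B1] subset_UNIV] .
  have ev2: "eventually (\<lambda>z. (\<Sum>n. diffs a n * z^n) = deriv (\<lambda>y. phi c \<theta> y u) z) (at_left 1)"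
    using evS by (rule eventually_mono) (simp add: dphi)
  have lim2: "((\<lambda>z. deriv (\<lambda>y. phi c \<theta> y u) z) \<longlongrightarrow> B) (at_left 1)"
    by (rule Lim_transform_eventually[OF L2' ev2])
  have s1: "summable a" using sK[of 1] K1 by simp
  have sn: "summable (\<lambda>n. real n * a n)"
  proof -
    have "summable (\<lambda>n. real (Suc n) * a (Suc n))" using sd1 by (simp add: diffs_def)
    then show ?thesis by (subst summable_Suc_iff[symmetric]) simp
  qed
  have B_eq: "B = (\<Sum>n. real n * a n)"
  proof -
    have "B = (\<Sum>n. real (Suc n) * a (Suc n))" by (simp add: B_def diffs_def)
    also have "\<dots> = (\<Sum>n. real n * a n) - real 0 * a 0" by (rule suminf_split_head[OF sn])
    finally show ?thesis by simp
  qed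
  let ?M = "walk_space c 1 \<theta>"
  define F where "F = {\<omega> \<in> space ?M. hit_time (real u) \<omega> < \<infinity>}"
  have Eu: "E n (int u) = {\<omega>. hit_time (real u) \<omega> = enat n}" for n
    by (simp add: E_def)
  have fin: "hit_time (real u) \<omega> < \<infinity> \<longleftrightarrow> (\<exists>n. hit_time (real u) \<omega> = enat n)" for \<omega>
    by (cases "hit_time (real u) \<omega>") auto
  have F_eq: "F = (\<Union>n. E n (int u))"
    by (auto simp: F_def Eu fin)
  have disj: "disjoint_family (\<lambda>n. E n (int u))"
    by (auto simp: disjoint_family_on_def Eu)
  have "emeasure ?M F = (\<Sum>n. emeasure ?M (E n (int u)))"
    unfolding F_eq by (rule suminf_emeasure[symmetric]) (use disj in auto)
  also have "\<dots> = (\<Sum>n. ennreal (a n))" by (simp add: emeasure_E emeasure_E1 a_def)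
  also have "\<dots> = ennreal A" unfolding A_def by (rule suminf_ennreal2[OF a_nn s1])
  finally have emF: "emeasure ?M F = ennreal A" .
  have A_nn: "0 \<le> A" unfolding A_def using a_nn s1 by (simp add: suminf_nonneg)
  have measF: "measure ?M F = A" using emF A_nn by (simp add: measure_def)
  define f where "f = (\<lambda>\<omega>. real (the_enat (hit_time (real u) \<omega>)) * indicator F \<omega>)"
  have f_sum: "f \<omega> = (\<Sum>n. real n * indicator (E n (int u)) \<omega>)" for \<omega>
  proof (cases "hit_time (real u) \<omega>")
    case (enat k)
    have "(\<lambda>n. real n * indicator (E n (int u)) \<omega>) = (\<lambda>n. if n = k then real n else 0)"
      using enat by (auto simp: Eu indicator_def)
    moreover have "(\<lambda>n. if n = k then real n else 0) sums real k" by (rule sums_single)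
    ultimately have "(\<Sum>n. real n * indicator (E n (int u)) \<omega>) = real k" by (simp add: sums_iff)
    then show ?thesis using enat by (simp add: f_def F_def)
  next
    case infinity
    then show ?thesis by (simp add: f_def F_def Eu indicator_def)
  qed
  have f_meas: "f \<in> borel_measurable ?M"
  proof -
    have "(\<lambda>\<omega>. \<Sum>n. real n * indicator (E n (int u)) \<omega>) \<in> borel_measurable ?M" by measurable
    moreover have "f = (\<lambda>\<omega>. \<Sum>n. real n * indicator (E n (int u)) \<omega>)" using f_sum by auto
    ultimately show ?thesis by simp
  qed
  have f_nn: "0 \<le> f \<omega>" for \<omega> by (simp add: f_def)
  have "(\<integral>\<^sup>+\<omega>. ennreal (f \<omega>) \<partial>?M) = (\<integral>\<^sup>+\<omega>. (\<Sum>n. ennreal (real n) * indicator (E n (int u)) \<omega>) \<partial>?M)"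
  proof (intro nn_integral_cong)
    fix \<omega>
    have "ennreal (f \<omega>) = (\<Sum>n. ennreal (real n * indicator (E n (int u)) \<omega>))"
    proof -
      have sm: "summable (\<lambda>n. real n * indicator (E n (int u)) \<omega>)"
      proof (cases "hit_time (real u) \<omega>")
        case (enat k)
        have "(\<lambda>n. real n * indicator (E n (int u)) \<omega>) = (\<lambda>n. if n = k then real n else 0)"
          using enat by (auto simp: Eu indicator_def)
        then show ?thesis by simp
      next
        case infinity
        then show ?thesis by (simp add: Eu indicator_def)
      qed
      show ?thesis unfolding f_sum by (rule suminf_ennreal2[symmetric]) (use sm in auto)
    qed
    also have "\<dots> = (\<Sum>n. ennreal (real n) * indicator (E n (int u)) \<omega>)"
      by (intro suminf_cong) (auto simp: indicator_def)
    finally show "ennreal (f \<omega>) = (\<Sum>n. ennreal (real n) * indicator (E n (int u)) \<omega>)" .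
  qed
  also have "\<dots> = (\<Sum>n. \<integral>\<^sup>+\<omega>. ennreal (real n) * indicator (E n (int u)) \<omega> \<partial>?M)"
    by (rule nn_integral_suminf) measurable
  also have "\<dots> = (\<Sum>n. ennreal (real n) * ennreal (a n))"
    by (simp add: nn_integral_cmult_indicator emeasure_E emeasure_E1 a_def)
  also have "\<dots> = (\<Sum>n. ennreal (real n * a n))" by (simp add: ennreal_mult a_nn)
  also have "\<dots> = ennreal (\<Sum>n. real n * a n)"
    by (rule suminf_ennreal2) (use sn a_nn in auto)
  finally have nnf: "(\<integral>\<^sup>+\<omega>. ennreal (f \<omega>) \<partial>?M) = ennreal B" by (simp add: B_eq)
  have B_nn: "0 \<le> B" unfolding B_eq using sn a_nn by (simp add: suminf_nonneg)
  have "has_bochner_integral ?M f B"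
    by (rule has_bochner_integral_nn_integral[OF f_meas _ B_nn nnf]) (simp add: f_nn)
  then have intf: "(\<integral>\<omega>. f \<omega> \<partial>?M) = B" by (simp add: has_bochner_integral_integral_eq)
  have "(let M = walk_space c 1 \<theta>; F = {\<omega> \<in> space M. hit_time (real u) \<omega> < \<infinity>}
               in (\<integral>\<omega>. real (the_enat (hit_time (real u) \<omega>)) * indicator F \<omega> \<partial>M) / measure M F = B / A)"
    using intf measF by (simp add: Let_def f_def F_def)
  then show ?thesis using lim1 lim2 by blast
qed

end

theorem lemma3p6:
  fixes c u :: nat and \<theta> :: real
  assumes "0 < c" and "real c / real (c+1) < \<theta>" and "\<theta> < 1" and "1 \<le> u"
  shows "\<exists>A B. ((\<lambda>z. phi c \<theta> z u) \<longlongrightarrow> A) (at_left 1)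
            \<and> ((\<lambda>z. deriv (\<lambda>y. phi c \<theta> y u) z) \<longlongrightarrow> B) (at_left 1)
            \<and> (let M = walk_space c 1 \<theta>; F = {\<omega> \<in> space M. hit_time (real u) \<omega> < \<infinity>}
               in (\<integral>\<omega>. real (the_enat (hit_time (real u) \<omega>)) * indicator F \<omega> \<partial>M) / measure M F = B / A)"
proof -
  interpret wp c \<theta> using assms(1-3) by unfold_locales
  show ?thesis using main[OF assms(4)] .
qed

end
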